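(* Assume $\operatorname{add}(\mathcal N)=\operatorname{cov}(\mathcal N)$. Then $\mathcal{NM}_{\operatorname{add}(\mathcal N)}$, $\mathcal{NF}_{\operatorname{add}(\mathcal N)}$ and $\mathcal{ND}_{\operatorname{add}(\mathcal N)}$ are positively $2^{\mathfrak c}$-coneable in $\left(\mathbb R^{[0,1]}\right)^{\operatorname{add}(\mathcal N)}$.
   Context: For a regular infinite cardinal $\kappa$ (ordinals $<\kappa$ with usual order), a $\kappa$-sequence $(x_\alpha)_{\alpha<\kappa}$ converges to $x$ if for every neighbourhood $U$ of $x$ there is $\alpha_0<\kappa$ with $x_\alpha\in U$ for all $\alpha_0<\alpha<\kappa$; $\left(\mathbb R^{[0,1]}\right)^{\kappa}$ is the real vector space of $\kappa$-sequences of functions $[0,1]\to\mathbb R$ with indexwise operations. $\lambda$ is Lebesgue measure, $\mathcal N$ the null subsets of $[0,1]$; $\operatorname{add}(\mathcal N)$ is the least cardinality of a family of null sets whose union is not null (a regular cardinal), $\operatorname{cov}(\mathcal N)$ the least cardinality of a family of null sets covering $[0,1]$. For bounded transfinite sequences of reals, $\liminf$ is the infimum of cluster points. $\mathcal{NM}_{\kappa}$: $\kappa$-sequences of Lebesgue measurable $f_\alpha:[0,1]\to\mathbb R$ with $0\le f_\alpha\le f_\beta$ a.e. for $\alpha\le\beta$, converging a.e. to an integrable $f$, with $\int f_\alpha\,d\lambda$ not converging to $\int f\,d\lambda$. $\mathcal{NF}_{\kappa}$: $\kappa$-sequences of Lebesgue measurable $f_\alpha\ge0$ a.e. with $\liminf_\alpha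 f_\alpha$ integrable and $\int\liminf_\alpha f_\alpha\,d\lambda>\liminf_\alpha\int f_\alpha\,d\lambda$. $\mathcal{ND}_{\kappa}$: $\kappa$-sequences of Lebesgue measurable $f_\alpha:[0,1]\to\mathbb R$ dominated a.e. by a common integrable $g$, converging a.e. to an integrable $f$, with $\int|f_\alpha-f|\,d\lambda\not\to0$. $S$ is positively $\mu$-coneable if there is a linearly independent $B\subset S$ of cardinality $\mu$ all of whose finite combinations with positive coefficients lie in $S$. *)

theory Defs
  imports "HOL-Analysis.Analysis" "HOL-Library.Equipollence"
begin

abbreviation lam :: "real measure" where
  "lam \<equiv> lebesgue_on {0..1}"

definition nullN :: "real set set" where
  "nullN = {N. N \<subseteq> {0..1} \<and> N \<in> null_sets lebesgue}"

text \<open>The cardinality of I equals add(N) (the least cardinality of a family of null sets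
  with non-null union).\<close>
definition is_addN :: "'i set \<Rightarrow> bool" where
  "is_addN I \<longleftrightarrow>
     (\<exists>F. F \<subseteq> nullN \<and> F \<approx> I \<and> \<Union>F \<notin> nullN) \<and>
     (\<forall>F. F \<subseteq> nullN \<and> F \<prec> I \<longrightarrow> \<Union>F \<in> nullN)"

text \<open>The cardinality of I equals cov(N) (the least cardinality of a family of null sets
  covering [0,1]).\<close>
definition is_covN :: "'i set \<Rightarrow> bool" where
  "is_covN I \<longleftrightarrow>
     (\<exists>F. F \<subseteq> nullN \<and> F \<approx> I \<and> \<Union>F = {0..1}) \<and>
     (\<forall>F. F \<subseteq> nullN \<and> F \<prec> I \<longrightarrow> \<Union>F \<noteq> {0..1})"

text \<open>Convergence of a transfinite sequence indexed by the well-order r on I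
  (the ordinals below kappa when r is a cardinal order).\<close>
definition kconv :: "'i set \<Rightarrow> 'i rel \<Rightarrow> ('i \<Rightarrow> 'b::topological_space) \<Rightarrow> 'b \<Rightarrow> bool" where
  "kconv I r x l \<longleftrightarrow>
     (\<forall>U. open U \<and> l \<in> U \<longrightarrow>
        (\<exists>a0\<in>I. \<forall>a\<in>I. (a0, a) \<in> r \<and> a \<noteq> a0 \<longrightarrow> x a \<in> U))"

definition kcluster :: "'i set \<Rightarrow> 'i rel \<Rightarrow> ('i \<Rightarrow> 'b::topological_space) \<Rightarrow> 'b \<Rightarrow> bool" where
  "kcluster I r x y \<longleftrightarrow>
     (\<forall>U. open U \<and> y \<in> U \<longrightarrow>
        (\<forall>a0\<in>I. \<exists>a\<in>I. (a0, a) \<in> r \<and> a \<noteq> a0 \<and> x a \<in> U))"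

definition kliminf :: "'i set \<Rightarrow> 'i rel \<Rightarrow> ('i \<Rightarrow> ereal) \<Rightarrow> ereal" where
  "kliminf I r x = Inf {y. kcluster I r x y}"

text \<open>The ambient vector space (R^[0,1])^kappa, realised as functions vanishing outside
  I \<times> [0,1], with pointwise (indexwise) operations.\<close>
definition seq_space :: "'i set \<Rightarrow> ('i \<Rightarrow> real \<Rightarrow> real) set" where
  "seq_space I = {F. \<forall>a x. (a \<notin> I \<or> x \<notin> {0..1}) \<longrightarrow> F a x = 0}"

definition lincomb :: "(('i \<Rightarrow> real \<Rightarrow> real) \<Rightarrow> real) \<Rightarrow> ('i \<Rightarrow> real \<Rightarrow> real) set
    \<Rightarrow> 'i \<Rightarrow> real \<Rightarrow> real" where
  "lincomb c T = (\<lambda>a x. \<Sum>b\<in>T. c b * b a x)"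

definition lin_indep :: "('i \<Rightarrow> real \<Rightarrow> real) set \<Rightarrow> bool" where
  "lin_indep B \<longleftrightarrow>
     (\<forall>T c. finite T \<and> T \<subseteq> B \<and> lincomb c T = (\<lambda>a x. 0) \<longrightarrow> (\<forall>b\<in>T. c b = 0))"

text \<open>S is positively mu-coneable (mu given as the cardinality of the set M).\<close>
definition pos_coneable :: "('i \<Rightarrow> real \<Rightarrow> real) set \<Rightarrow> 'm set \<Rightarrow> bool" where
  "pos_coneable S M \<longleftrightarrow>
     (\<exists>B. B \<subseteq> S \<and> B \<approx> M \<and> lin_indep B \<and>
        (\<forall>T c. finite T \<and> T \<noteq> {} \<and> T \<subseteq> B \<and> (\<forall>b\<in>T. c b > 0) \<longrightarrow> lincomb c T \<in> S))"

definition NM :: "'i set \<Rightarrow> 'i rel \<Rightarrow> ('i \<Rightarrow> real \<Rightarrow> real) set" where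
  "NM I r = {F \<in> seq_space I.
     (\<forall>a\<in>I. F a \<in> borel_measurable lam) \<and>
     (\<forall>a\<in>I. \<forall>b\<in>I. (a, b) \<in> r \<longrightarrow> (AE x in lam. 0 \<le> F a x \<and> F a x \<le> F b x)) \<and>
     (\<exists>f. integrable lam f \<and> (AE x in lam. kconv I r (\<lambda>a. F a x) (f x)) \<and>
        \<not> kconv I r (\<lambda>a. enn2ereal (\<integral>\<^sup>+ x. ennreal (F a x) \<partial>lam)) (ereal (integral\<^sup>L lam f)))}"

definition NF :: "'i set \<Rightarrow> 'i rel \<Rightarrow> ('i \<Rightarrow> real \<Rightarrow> real) set" where
  "NF I r = {F \<in> seq_space I.
     (\<forall>a\<in>I. F a \<in> borel_measurable lam) \<and>
     (\<forall>a\<in>I. AE x in lam. 0 \<le> F a x) \<and>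
     (let g = (\<lambda>x. kliminf I r (\<lambda>a. ereal (F a x))) in
        (AE x in lam. \<bar>g x\<bar> \<noteq> \<infinity>) \<and>
        integrable lam (\<lambda>x. real_of_ereal (g x)) \<and>
        ereal (integral\<^sup>L lam (\<lambda>x. real_of_ereal (g x)))
          > kliminf I r (\<lambda>a. enn2ereal (\<integral>\<^sup>+ x. ennreal (F a x) \<partial>lam)))}"

definition ND :: "'i set \<Rightarrow> 'i rel \<Rightarrow> ('i \<Rightarrow> real \<Rightarrow> real) set" where
  "ND I r = {F \<in> seq_space I.
     (\<forall>a\<in>I. F a \<in> borel_measurable lam) \<and>
     (\<exists>g. integrable lam g \<and> (\<forall>a\<in>I. AE x in lam. \<bar>F a x\<bar> \<le> g x)) \<and>
     (\<exists>f. integrable lam f \<and> (AE x in lam. kconv I r (\<lambda>a. F a x) (f x)) \<and>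
        \<not> kconv I r (\<lambda>a. integral\<^sup>L lam (\<lambda>x. \<bar>F a x - f x\<bar>)) 0)}"

end

theory Submission
  imports Defs "HOL-Algebra.Free_Abelian_Groups"
begin


lemma null_lam: "N \<in> null_sets lebesgue \<Longrightarrow> N \<inter> {0..1} \<in> null_sets lam"
  by (simp add: null_sets_restrict_space null_set_Int2)

lemma AE_lam:
  assumes "N \<in> null_sets lebesgue" "\<And>x. x \<in> {0..1} - N \<Longrightarrow> P x"
  shows "AE x in lam. P x"
  by (rule AE_I'[OF null_lam[OF assms(1)]]) (use assms(2) in auto)

lemma meas_lam:
  fixes f :: "real \<Rightarrow> real"
  assumes "N \<in> null_sets lebesgue" "\<And>x. x \<in> {0..1} - N \<Longrightarrow> f x = c"
  shows "f \<in> borel_measurable lam"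
proof -
  have N: "N \<inter> {0..1} \<in> null_sets lam" by (rule null_lam[OF assms(1)])
  have "f \<in> borel_measurable (lebesgue_on ({0..1} - N \<inter> {0..1}))"
    by (rule measurable_cong[THEN iffD2, of _ _ "\<lambda>x. c"]) (use assms(2) in auto)
  then show ?thesis
    by (subst (asm) borel_measurable_diff_null[OF N]) auto
qed

lemma measure_Icc_real: "a \<le> b \<Longrightarrow> measure lebesgue {a..b::real} = b - a"
proof -
  assume "a \<le> b"
  have "measure lebesgue {a..b::real} = measure lborel {a..b}"
    by (rule measure_completion) simp
  then show ?thesis using \<open>a \<le> b\<close> by simp
qed

lemma measure_lam_space: "measure lam (space lam) = 1"
proof -
  have "measure lam (space lam) = measure lebesgue {0..1::real}"
    by (simp add: measure_restrict_space)
  also have "\<dots> = 1" by (simp add: measure_Icc_real)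
  finally show ?thesis .
qed

lemma integral_lam:
  fixes f :: "real \<Rightarrow> real"
  assumes "N \<in> null_sets lebesgue" "\<And>x. x \<in> {0..1} - N \<Longrightarrow> f x = c"
  shows "integrable lam f" "integral\<^sup>L lam f = c"
proof -
  have m: "f \<in> borel_measurable lam" by (rule meas_lam[OF assms])
  have mc: "(\<lambda>x. c) \<in> borel_measurable lam" by simp
  have ae: "AE x in lam. f x = c" by (rule AE_lam[OF assms(1)]) (use assms(2) in auto)
  have fm: "finite_measure lam" by (rule finite_measure_lebesgue_on) auto
  have ic: "integrable lam (\<lambda>x. c)" by (rule finite_measure.integrable_const[OF fm])
  show "integrable lam f"
    using integrable_cong_AE[OF m mc ae] ic by simp
  have "integral\<^sup>L lam f = integral\<^sup>L lam (\<lambda>x. c)"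
    by (rule integral_cong_AE[OF m mc ae])
  also have "\<dots> = c" using measure_lam_space by simp
  finally show "integral\<^sup>L lam f = c" .
qed

lemma nn_integral_lam0:
  assumes "N \<in> null_sets lebesgue" "\<And>x. x \<in> {0..1} - N \<Longrightarrow> f x = 0"
  shows "(\<integral>\<^sup>+ x. ennreal (f x) \<partial>lam) = 0"
proof -
  have ae: "AE x in lam. ennreal (f x) = 0" by (rule AE_lam[OF assms(1)]) (use assms(2) in auto)
  have "(\<integral>\<^sup>+ x. ennreal (f x) \<partial>lam) = (\<integral>\<^sup>+ x. 0 \<partial>lam)"
    by (rule nn_integral_cong_AE[OF ae])
  then show ?thesis by simp
qed



definition cw :: "nat \<Rightarrow> real" where "cw n = (1/4)^Suc n"

definition phi :: "(nat \<Rightarrow> bool) \<Rightarrow> real" where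
  "phi s = suminf (\<lambda>n. of_bool (s n) * cw n)"

lemma cw_tail_sums: "(\<lambda>n. cw (n + m)) sums ((1/4)^m / 3)"
proof -
  have "(\<lambda>n. (1/4::real)^n) sums (1 / (1 - 1/4))"
    by (rule geometric_sums) simp
  then have X: "(\<lambda>n. ((1/4::real)^Suc m) * (1/4)^n) sums (((1/4)^Suc m) * (1 / (1 - 1/4)))"
    by (rule sums_mult)
  have eq: "(\<lambda>n. cw (n + m)) = (\<lambda>n. ((1/4::real)^Suc m) * (1/4)^n)"
    by (rule ext) (simp add: cw_def power_add)
  have ce: "((1/4::real)^Suc m) * (1 / (1 - 1/4)) = (1/4)^m / 3"
    by simp
  show ?thesis using X unfolding eq ce .
qed

lemma summable_cw: "summable cw"
  using sums_summable[OF cw_tail_sums[of 0]] by simp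

lemma cw_pos: "0 < cw n" by (simp add: cw_def)

lemma summable_tail: "summable (\<lambda>n. of_bool (s (n + m)) * cw (n + m))"
  by (rule summable_comparison_test'[OF sums_summable[OF cw_tail_sums[of m]]])
     (simp add: cw_pos less_imp_le)

lemma summable_phi: "summable (\<lambda>n. of_bool (s n) * cw n)"
  using summable_tail[of s 0] by simp

lemma phi_decomp:
  "\<exists>R. phi s = (\<Sum>n<m. of_bool (s n) * cw n) + R \<and> 0 \<le> R \<and> R \<le> (1/4)^m / 3"
proof -
  let ?R = "suminf (\<lambda>n. of_bool (s (n + m)) * cw (n + m))"
  have "phi s = ?R + (\<Sum>n<m. of_bool (s n) * cw n)"
    unfolding phi_def by (rule suminf_split_initial_segment[OF summable_phi])
  moreover have "0 \<le> ?R"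
    by (rule suminf_nonneg[OF summable_tail]) (simp add: cw_pos less_imp_le)
  moreover have "?R \<le> suminf (\<lambda>n. cw (n + m))"
    by (rule suminf_le) (auto simp: summable_tail sums_summable[OF cw_tail_sums] cw_pos less_imp_le summable_cw)
  moreover have "suminf (\<lambda>n. cw (n + m)) = (1/4)^m / 3"
    using cw_tail_sums sums_unique by metis
  ultimately show ?thesis by (intro exI[of _ ?R]) auto
qed

lemma phi_range: "phi s \<in> {0..1}"
  using phi_decomp[of s 0] by auto

lemma phi_less:
  assumes "\<forall>n<m. s n = t n" "s m" "\<not> t m"
  shows "phi t < phi s"
proof -
  obtain R1 where R1: "phi s = (\<Sum>n<Suc m. of_bool (s n) * cw n) + R1" "0 \<le> R1"
    using phi_decomp by blast
  obtain R2 where R2: "phi t = (\<Sum>n<Suc m. of_bool (t n) * cw n) + R2" "R2 \<le> (1/4)^Suc m / 3"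
    using phi_decomp by blast
  have eq: "(\<Sum>n<m. of_bool (s n) * cw n) = (\<Sum>n<m. of_bool (t n) * cw n)"
    using assms(1) by (intro sum.cong) auto
  have "phi t \<le> (\<Sum>n<m. of_bool (t n) * cw n) + (1/4)^Suc m / 3"
    using R2 assms(3) by simp
  also have "\<dots> < (\<Sum>n<m. of_bool (t n) * cw n) + cw m"
    by (simp add: cw_def)
  also have "\<dots> \<le> phi s"
    using R1 assms(2) eq by simp
  finally show ?thesis .
qed

lemma inj_phi: "inj phi"
proof (rule injI, rule ccontr)
  fix s t assume eq: "phi s = phi t" and ne: "s \<noteq> t"
  then obtain k where "s k \<noteq> t k" by auto
  define m where "m = (LEAST n. s n \<noteq> t n)"
  have m1: "s m \<noteq> t m" unfolding m_def by (rule LeastI[of _ k]) fact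
  have m2: "\<forall>n<m. s n = t n" unfolding m_def using not_less_Least by blast
  show False
  proof (cases "s m")
    case True
    then have "phi t < phi s" using phi_less[OF m2] m1 by simp
    then show False using eq by simp
  next
    case False
    then have "phi s < phi t" using phi_less[of m t s] m2 m1 by simp
    then show False using eq by simp
  qed
qed

lemma phi_null: "range phi \<in> null_sets lebesgue"
proof -
  define p where "p P = (\<Sum>n\<in>P. cw n)" for P
  define U where "U m = (\<Union>P\<in>Pow {..<m}. {p P .. p P + (1/4)^m})" for m :: nat
  have sub: "range phi \<subseteq> U m" for m
  proof
    fix x assume "x \<in> range phi"
    then obtain s where x: "x = phi s" by auto
    obtain R where R: "phi s = (\<Sum>n<m. of_bool (s n) * cw n) + R" "0 \<le> R" "R \<le> (1/4)^m / 3"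
      using phi_decomp by blast
    let ?P = "{n\<in>{..<m}. s n}"
    have "?P = {..<m} \<inter> {n. s n}" by auto
    then have pe: "p ?P = (\<Sum>n<m. if n \<in> {n. s n} then cw n else 0)"
      unfolding p_def by (simp only: sum.inter_restrict[OF finite_lessThan])
    have e1': "(\<Sum>n<m. of_bool (s n) * cw n) = (\<Sum>n<m. if n \<in> {n. s n} then cw n else 0)"
      by (intro sum.cong) auto
    have "(\<Sum>n<m. of_bool (s n) * cw n) = p ?P"
      by (rule trans[OF e1' sym[OF pe]])
    then have "x \<in> {p ?P .. p ?P + (1/4)^m}"
      using R x by auto
    moreover have "?P \<in> Pow {..<m}" by auto
    ultimately show "x \<in> U m" unfolding U_def by (rule UN_I[rotated])
  qed
  have meas: "U m \<in> lmeasurable" for m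
    unfolding U_def
  proof (rule fmeasurable.finite_UN)
    show "finite (Pow {..<m})" by simp
    fix P
    show "{p P .. p P + (1/4)^m} \<in> lmeasurable"
      using lmeasurable_cbox[of "p P" "p P + (1/4)^m"] by (simp only: cbox_interval)
  qed
  have le: "measure lebesgue (U m) \<le> (1/2)^m" for m
  proof -
    have "measure lebesgue (U m) \<le> (\<Sum>P\<in>Pow {..<m}. measure lebesgue {p P .. p P + (1/4)^m})"
      unfolding U_def by (rule measure_UNION_le) auto
    also have "\<dots> = (\<Sum>P\<in>Pow {..<m}. (1/4::real)^m)"
      by (intro sum.cong) (auto simp: measure_Icc_real)
    also have "\<dots> = 2^m * (1/4)^m"
      by (simp add: card_Pow)
    also have "\<dots> = (1/2::real)^m"
      by (simp add: power_divide[symmetric] power_mult_distrib[symmetric])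
    finally show ?thesis .
  qed
  have "negligible (range phi)"
    unfolding negligible_outer_le
  proof (intro allI impI)
    fix e :: real assume "e > 0"
    then obtain m where "(1/2::real)^m < e" using real_arch_pow_inv[of e "1/2"] by auto
    then show "\<exists>T. range phi \<subseteq> T \<and> T \<in> lmeasurable \<and> measure lebesgue T \<le> e"
      using sub[of m] meas[of m] le[of m] by (intro exI[of _ "U m"]) auto
  qed
  then show ?thesis by (simp add: negligible_iff_null_sets)
qed

lemma null_code:
  "\<exists>Z (j::real set \<Rightarrow> real). Z \<in> null_sets lebesgue \<and> Z \<subseteq> {0..1} \<and>
      inj_on j (Fpow UNIV) \<and> j ` Fpow UNIV \<subseteq> Z"
proof -
  have "Fpow (UNIV::real set) \<approx> (UNIV::real set)"
    by (rule eqpoll_Fpow) (simp add: infinite_UNIV_char_0)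
  then obtain e1 :: "real set \<Rightarrow> real" where e1: "inj_on e1 (Fpow (UNIV::real set))"
    unfolding eqpoll_def bij_betw_def by blast
  define e2 :: "real \<Rightarrow> nat \<Rightarrow> bool" where "e2 x n = (of_rat (from_nat n) < x)" for x n
  have e2: "inj e2"
  proof (rule injI, rule ccontr)
    fix x y assume eq: "e2 x = e2 y" and ne: "x \<noteq> y"
    have "\<exists>q::rat. min x y < of_rat q \<and> of_rat q < max x y"
      using ne by (metis min_less_iff_disj max_less_iff_conj of_rat_dense linorder_neqE_linordered_idom
         max.absorb1 max.absorb2 min.absorb1 min.absorb2 order_less_imp_le)
    then obtain q :: rat where q: "min x y < of_rat q" "of_rat q < max x y" by auto
    have "e2 x (to_nat q) = e2 y (to_nat q)" using eq by simp
    then have "(of_rat q < x) = (of_rat q < y)" by (simp add: e2_def)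
    then show False using q by (cases "x \<le> y") (auto simp: min_def max_def)
  qed
  define j where "j = phi \<circ> e2 \<circ> e1"
  have "inj_on j (Fpow UNIV)"
    unfolding j_def using e1 e2 inj_phi
    by (meson comp_inj_on inj_on_subset subset_UNIV)
  moreover have "j ` Fpow UNIV \<subseteq> range phi" unfolding j_def by auto
  moreover have "range phi \<subseteq> {0..1}" using phi_range by auto
  ultimately show ?thesis using phi_null by blast
qed



locale setting =
  fixes I :: "'i set" and r :: "'i rel" and A :: "'i \<Rightarrow> real set" and Z :: "real set"
  assumes wo: "well_order_on I r"
    and Znull: "Z \<in> null_sets lebesgue"
    and Anull: "\<And>a. a \<in> I \<Longrightarrow> A a \<in> null_sets lebesgue"
    and cover: "\<And>x. x \<in> {0..1} \<Longrightarrow> \<exists>b\<in>I. \<forall>a\<in>I. (b, a) \<in> r \<and> a \<noteq> b \<longrightarrow> x \<in> A a"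
    and tail: "\<And>a0. a0 \<in> I \<Longrightarrow> \<exists>a\<in>I. (a0, a) \<in> r \<and> a \<noteq> a0"
    and nonempty: "I \<noteq> {}"
begin

lemma lin: "linear_order_on I r"
  using wo by (simp add: well_order_on_def)

lemma po: "partial_order_on I r"
  using lin by (simp add: linear_order_on_def)

lemma reflr: "a \<in> I \<Longrightarrow> (a, a) \<in> r"
  using po unfolding partial_order_on_def preorder_on_def refl_on_def by simp

lemma total: "a \<in> I \<Longrightarrow> b \<in> I \<Longrightarrow> (a, b) \<in> r \<or> (b, a) \<in> r"
proof -
  assume ab: "a \<in> I" "b \<in> I"
  have "total_on I r" using lin by (simp add: linear_order_on_def)
  then show ?thesis using ab reflr[of a] unfolding total_on_def by (cases "a = b") auto
qed

lemma transr: "(a, b) \<in> r \<Longrightarrow> (b, c) \<in> r \<Longrightarrow> (a, c) \<in> r"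
proof -
  have "trans r" using po by (simp add: partial_order_on_def preorder_on_def)
  then show "(a, b) \<in> r \<Longrightarrow> (b, c) \<in> r \<Longrightarrow> (a, c) \<in> r" by (rule transD)
qed

lemma antisymr: "(a, b) \<in> r \<Longrightarrow> (b, a) \<in> r \<Longrightarrow> a = b"
proof -
  have "antisym r" using po by (simp add: partial_order_on_def)
  then show "(a, b) \<in> r \<Longrightarrow> (b, a) \<in> r \<Longrightarrow> a = b" by (rule antisymD)
qed

lemma common_after:
  assumes a0: "a0 \<in> I" and b: "b \<in> I"
  shows "\<exists>a\<in>I. (a0, a) \<in> r \<and> a \<noteq> a0 \<and> (b, a) \<in> r \<and> a \<noteq> b"
proof -
  obtain m where m: "m \<in> I" "(a0, m) \<in> r" "(b, m) \<in> r"
  proof (cases "(a0, b) \<in> r")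
    case True
    then show ?thesis using that[of b] b reflr[OF b] by simp
  next
    case False
    then have "(b, a0) \<in> r" using total[OF a0 b] by simp
    then show ?thesis using that[of a0] a0 reflr[OF a0] by simp
  qed
  obtain a where a: "a \<in> I" "(m, a) \<in> r" "a \<noteq> m" using tail[OF m(1)] by blast
  have n1: "a \<noteq> a0"
  proof
    assume "a = a0"
    then have "m = a0" using antisymr[OF m(2)] a(2) by simp
    then show False using a(3) \<open>a = a0\<close> by simp
  qed
  have n2: "a \<noteq> b"
  proof
    assume "a = b"
    then have "m = b" using antisymr[OF m(3)] a(2) by simp
    then show False using a(3) \<open>a = b\<close> by simp
  qed
  have "(a0, a) \<in> r" by (rule transr[OF m(2) a(2)])
  moreover have "(b, a) \<in> r" by (rule transr[OF m(3) a(2)])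
  ultimately show ?thesis using a(1) n1 n2 by blast
qed

lemma kconv_ev:
  assumes "b \<in> I" "\<forall>a\<in>I. (b, a) \<in> r \<and> a \<noteq> b \<longrightarrow> x a = l"
  shows "kconv I r x l"
  unfolding kconv_def
proof (intro allI impI)
  fix U assume "open U \<and> l \<in> U"
  then show "\<exists>a0\<in>I. \<forall>a\<in>I. (a0, a) \<in> r \<and> a \<noteq> a0 \<longrightarrow> x a \<in> U"
    using assms by (intro bexI[of _ b]) auto
qed

lemma not_kconv_const:
  fixes x :: "'i \<Rightarrow> 'b::t1_space"
  assumes "\<forall>a\<in>I. x a = c" "c \<noteq> l"
  shows "\<not> kconv I r x l"
proof
  assume k: "kconv I r x l"
  have U: "open (- {c}) \<and> l \<in> - {c}" using assms(2) by auto
  obtain a0 where a0: "a0 \<in> I" "\<forall>a\<in>I. (a0, a) \<in> r \<and> a \<noteq> a0 \<longrightarrow> x a \<in> - {c}"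
    using k U unfolding kconv_def by blast
  obtain a where "a \<in> I" "(a0, a) \<in> r" "a \<noteq> a0" using tail[OF a0(1)] by blast
  then have "x a \<in> - {c}" using a0(2) by blast
  then show False using assms(1) \<open>a \<in> I\<close> by simp
qed

lemma kliminf_ev:
  assumes b: "b \<in> I" and ev: "\<forall>a\<in>I. (b, a) \<in> r \<and> a \<noteq> b \<longrightarrow> x a = c"
  shows "kliminf I r x = c"
proof -
  have "{y. kcluster I r x y} = {c}"
  proof (intro equalityI subsetI)
    fix y assume "y \<in> {y. kcluster I r x y}"
    then have cl: "kcluster I r x y" by simp
    show "y \<in> {c}"
    proof (rule ccontr)
      assume "y \<notin> {c}"
      then have U: "open (- {c}) \<and> y \<in> - {c}" by auto
      have "\<forall>a0\<in>I. \<exists>a\<in>I. (a0, a) \<in> r \<and> a \<noteq> a0 \<and> x a \<in> - {c}"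
        using cl U unfolding kcluster_def by blast
      then obtain a where "a \<in> I" "(b, a) \<in> r" "a \<noteq> b" "x a \<in> - {c}"
        using b by blast
      then show False using ev by simp
    qed
  next
    fix y assume "y \<in> {c}"
    then have y: "y = c" by simp
    show "y \<in> {y. kcluster I r x y}"
      unfolding kcluster_def
    proof (intro CollectI allI impI ballI)
      fix U a0 assume U: "open U \<and> y \<in> U" and a0: "a0 \<in> I"
      obtain a where a: "a \<in> I" "(a0, a) \<in> r" "a \<noteq> a0" "(b, a) \<in> r" "a \<noteq> b"
        using common_after[OF a0 b] by blast
      then have "x a \<in> U" using ev U y by simp
      then show "\<exists>a\<in>I. (a0, a) \<in> r \<and> a \<noteq> a0 \<and> x a \<in> U"
        using a by blast
    qed
  qed
  then show ?thesis unfolding kliminf_def by simp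
qed

lemma kliminf_const:
  assumes "\<forall>a\<in>I. x a = c"
  shows "kliminf I r x = c"
proof -
  obtain b where b: "b \<in> I" using nonempty by auto
  have "\<forall>a\<in>I. (b, a) \<in> r \<and> a \<noteq> b \<longrightarrow> x a = c" using assms by simp
  then show ?thesis by (rule kliminf_ev[OF b])
qed

definition G :: "real \<Rightarrow> (real \<Rightarrow> real) \<Rightarrow> 'i \<Rightarrow> real \<Rightarrow> real" where
  "G C H a x = (if a \<in> I \<and> x \<in> {0..1} then (if x \<in> Z then H x else C * indicator (A a) x) else 0)"

lemma G_null: "a \<in> I \<Longrightarrow> Z \<union> A a \<in> null_sets lebesgue"
  using Znull Anull by auto

lemma G_zero: "a \<in> I \<Longrightarrow> x \<in> {0..1} - (Z \<union> A a) \<Longrightarrow> G C H a x = 0"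
  unfolding G_def by auto

lemma G_ev:
  assumes "x \<in> {0..1} - Z"
  shows "\<exists>b\<in>I. \<forall>a\<in>I. (b, a) \<in> r \<and> a \<noteq> b \<longrightarrow> G C H a x = C"
proof -
  obtain b where b: "b \<in> I" "\<forall>a\<in>I. (b, a) \<in> r \<and> a \<noteq> b \<longrightarrow> x \<in> A a"
    using cover[of x] assms by auto
  have "G C H a x = C" if "a \<in> I" "(b, a) \<in> r" "a \<noteq> b" for a
    using b that assms unfolding G_def by simp
  then show ?thesis using b(1) by blast
qed

lemma G_meas: assumes "a \<in> I" shows "G C H a \<in> borel_measurable lam"
  by (rule meas_lam[OF G_null[OF assms]]) (rule G_zero[OF assms])

lemma G_seq: "G C H \<in> seq_space I"
  unfolding seq_space_def G_def by auto

lemma G_nn: assumes "a \<in> I" shows "(\<integral>\<^sup>+ x. ennreal (G C H a x) \<partial>lam) = 0"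
  by (rule nn_integral_lam0[OF G_null[OF assms]]) (rule G_zero[OF assms])

lemma G_NM:
  assumes C: "C > 0"
  shows "G C H \<in> NM I r"
proof -
  have 1: "G C H \<in> seq_space I" by (rule G_seq)
  have 2: "\<forall>a\<in>I. G C H a \<in> borel_measurable lam" using G_meas by blast
  have 3: "\<forall>a\<in>I. \<forall>b\<in>I. (a, b) \<in> r \<longrightarrow> (AE x in lam. 0 \<le> G C H a x \<and> G C H a x \<le> G C H b x)"
  proof (intro ballI impI)
    fix a b assume that: "a \<in> I" "b \<in> I"
    have n: "Z \<union> A a \<union> A b \<in> null_sets lebesgue" using that Znull Anull by auto
    show "AE x in lam. 0 \<le> G C H a x \<and> G C H a x \<le> G C H b x"
    proof (rule AE_lam[OF n])
      fix x assume x: "x \<in> {0..1} - (Z \<union> A a \<union> A b)"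
      have "G C H a x = 0" by (rule G_zero) (use x that in auto)
      moreover have "G C H b x = 0" by (rule G_zero) (use x that in auto)
      ultimately show "0 \<le> G C H a x \<and> G C H a x \<le> G C H b x" by simp
    qed
  qed
  have 4: "integrable lam (\<lambda>x. C)"
    using integral_lam(1)[of "{}" "\<lambda>x. C" C] by auto
  have 5: "AE x in lam. kconv I r (\<lambda>a. G C H a x) C"
  proof (rule AE_lam[OF Znull])
    fix x assume x: "x \<in> {0..1} - Z"
    obtain b where "b \<in> I" "\<forall>a\<in>I. (b, a) \<in> r \<and> a \<noteq> b \<longrightarrow> G C H a x = C"
      using G_ev[OF x] by blast
    then show "kconv I r (\<lambda>a. G C H a x) C" by (rule kconv_ev)
  qed
  have i: "integral\<^sup>L lam (\<lambda>x. C) = C"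
    using integral_lam(2)[of "{}" "\<lambda>x. C" C] by auto
  have 6: "\<not> kconv I r (\<lambda>a. enn2ereal (\<integral>\<^sup>+ x. ennreal (G C H a x) \<partial>lam)) (ereal (integral\<^sup>L lam (\<lambda>x. C)))"
    unfolding i by (rule not_kconv_const[of _ 0]) (use C G_nn in \<open>auto simp: zero_ennreal.rep_eq\<close>)
  show ?thesis unfolding NM_def
    by (intro CollectI conjI exI[of _ "\<lambda>x. C"] 1 2 3 4 5 6)
qed

lemma G_ND:
  assumes C: "C > 0"
  shows "G C H \<in> ND I r"
proof -
  have 1: "G C H \<in> seq_space I" by (rule G_seq)
  have 2: "\<forall>a\<in>I. G C H a \<in> borel_measurable lam" using G_meas by blast
  have 3: "integrable lam (\<lambda>x. 0::real)" by simp
  have 4: "\<forall>a\<in>I. AE x in lam. \<bar>G C H a x\<bar> \<le> 0"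
  proof
    fix a assume a: "a \<in> I"
    show "AE x in lam. \<bar>G C H a x\<bar> \<le> 0"
    proof (rule AE_lam[OF G_null[OF a]])
      fix x assume "x \<in> {0..1} - (Z \<union> A a)"
      then have "G C H a x = 0" by (rule G_zero[OF a])
      then show "\<bar>G C H a x\<bar> \<le> 0" by simp
    qed
  qed
  have 5: "integrable lam (\<lambda>x. C)"
    using integral_lam(1)[of "{}" "\<lambda>x. C" C] by auto
  have 6: "AE x in lam. kconv I r (\<lambda>a. G C H a x) C"
  proof (rule AE_lam[OF Znull])
    fix x assume x: "x \<in> {0..1} - Z"
    obtain b where "b \<in> I" "\<forall>a\<in>I. (b, a) \<in> r \<and> a \<noteq> b \<longrightarrow> G C H a x = C"
      using G_ev[OF x] by blast
    then show "kconv I r (\<lambda>a. G C H a x) C" by (rule kconv_ev)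
  qed
  have i: "integral\<^sup>L lam (\<lambda>x. \<bar>G C H a x - C\<bar>) = C" if a: "a \<in> I" for a
  proof (rule integral_lam(2)[OF G_null[OF a]])
    fix x assume "x \<in> {0..1} - (Z \<union> A a)"
    then have "G C H a x = 0" by (rule G_zero[OF a])
    then show "\<bar>G C H a x - C\<bar> = C" using C by simp
  qed
  have 7: "\<not> kconv I r (\<lambda>a. integral\<^sup>L lam (\<lambda>x. \<bar>G C H a x - C\<bar>)) 0"
    by (rule not_kconv_const[of _ C]) (use i C in auto)
  have e1: "\<exists>g. integrable lam g \<and> (\<forall>a\<in>I. AE x in lam. \<bar>G C H a x\<bar> \<le> g x)"
    by (intro exI[of _ "\<lambda>x. 0"] conjI 3 4)
  have e2: "\<exists>f. integrable lam f \<and> (AE x in lam. kconv I r (\<lambda>a. G C H a x) (f x)) \<and>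
        \<not> kconv I r (\<lambda>a. integral\<^sup>L lam (\<lambda>x. \<bar>G C H a x - f x\<bar>)) 0"
    by (intro exI[of _ "\<lambda>x. C"] conjI 5 6 7)
  show ?thesis unfolding ND_def
    by (intro CollectI conjI 1 2 e1 e2)
qed

lemma G_NF:
  assumes C: "C > 0"
  shows "G C H \<in> NF I r"
proof -
  have 1: "G C H \<in> seq_space I" by (rule G_seq)
  have 2: "\<forall>a\<in>I. G C H a \<in> borel_measurable lam" using G_meas by blast
  have 3: "\<forall>a\<in>I. AE x in lam. 0 \<le> G C H a x"
  proof
    fix a assume a: "a \<in> I"
    show "AE x in lam. 0 \<le> G C H a x"
    proof (rule AE_lam[OF G_null[OF a]])
      fix x assume "x \<in> {0..1} - (Z \<union> A a)"
      then have "G C H a x = 0" by (rule G_zero[OF a])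
      then show "0 \<le> G C H a x" by simp
    qed
  qed
  define g where "g x = kliminf I r (\<lambda>a. ereal (G C H a x))" for x
  have g: "g x = ereal C" if x: "x \<in> {0..1} - Z" for x
  proof -
    obtain b where "b \<in> I" "\<forall>a\<in>I. (b, a) \<in> r \<and> a \<noteq> b \<longrightarrow> G C H a x = C"
      using G_ev[OF x] by blast
    then show ?thesis unfolding g_def by (intro kliminf_ev[of b]) auto
  qed
  have 4: "AE x in lam. \<bar>g x\<bar> \<noteq> \<infinity>"
    by (rule AE_lam[OF Znull]) (use g in auto)
  have 5: "integrable lam (\<lambda>x. real_of_ereal (g x))"
    by (rule integral_lam(1)[OF Znull, of _ C]) (use g in auto)
  have i: "integral\<^sup>L lam (\<lambda>x. real_of_ereal (g x)) = C"
    by (rule integral_lam(2)[OF Znull]) (use g in auto)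
  have k: "kliminf I r (\<lambda>a. enn2ereal (\<integral>\<^sup>+ x. ennreal (G C H a x) \<partial>lam)) = 0"
    by (rule kliminf_const) (use G_nn in \<open>auto simp: zero_ennreal.rep_eq\<close>)
  have 6: "ereal (integral\<^sup>L lam (\<lambda>x. real_of_ereal (g x)))
      > kliminf I r (\<lambda>a. enn2ereal (\<integral>\<^sup>+ x. ennreal (G C H a x) \<partial>lam))"
    unfolding i k using C by simp
  show ?thesis unfolding NF_def Let_def
    by (intro CollectI conjI 1 2 3 4[unfolded g_def] 5[unfolded g_def] 6[unfolded g_def])
qed

end


lemma subset_indep:
  fixes d :: "'a set \<Rightarrow> real"
  assumes "finite SS" "\<forall>T. finite T \<longrightarrow> (\<Sum>S\<in>SS. if T \<subseteq> S then d S else 0) = 0"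
  shows "\<forall>S\<in>SS. d S = 0"
proof -
  have "\<forall>d. (\<forall>T. finite T \<longrightarrow> (\<Sum>S\<in>SS. if T \<subseteq> S then d S else (0::real)) = 0) \<longrightarrow> (\<forall>S\<in>SS. d S = 0)"
    using assms(1)
  proof (induction SS rule: finite_remove_induct)
    case empty then show ?case by simp
  next
    case (remove A)
    show ?case
    proof (intro allI impI)
      fix d :: "'a set \<Rightarrow> real"
      assume h: "\<forall>T. finite T \<longrightarrow> (\<Sum>S\<in>A. if T \<subseteq> S then d S else 0) = 0"
      obtain S0 where S0: "S0 \<in> A" "\<forall>S\<in>A. S0 \<subseteq> S \<longrightarrow> S0 = S"
        using finite_has_maximal[OF remove.hyps(1) remove.hyps(2)] by blast
      have "\<forall>S\<in>A-{S0}. \<exists>t. t \<in> S0 \<and> t \<notin> S" using S0 by blast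
      then obtain t where t: "\<forall>S\<in>A-{S0}. t S \<in> S0 \<and> t S \<notin> S"
        using bchoice[of "A-{S0}" "\<lambda>S t. t \<in> S0 \<and> t \<notin> S"] by blast
      let ?T = "t ` (A - {S0})"
      have fin: "finite ?T" using remove.hyps(1) by simp
      have "(\<Sum>S\<in>A. if ?T \<subseteq> S then d S else 0) = (\<Sum>S\<in>A. if S = S0 then d S else 0)"
      proof (rule sum.cong[OF refl])
        fix S assume S: "S \<in> A"
        show "(if ?T \<subseteq> S then d S else 0) = (if S = S0 then d S else 0)"
        proof (cases "S = S0")
          case True
          then have "?T \<subseteq> S" using t by auto
          then show ?thesis using True by simp
        next
          case False
          then have "t S \<in> ?T" "t S \<notin> S" using S t by auto
          then have "\<not> ?T \<subseteq> S" by blast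
          then show ?thesis using False by simp
        qed
      qed
      also have "\<dots> = d S0" using S0(1) remove.hyps(1) by (simp add: sum.delta)
      finally have d0: "d S0 = 0" using h fin by simp
      have "\<forall>T. finite T \<longrightarrow> (\<Sum>S\<in>A-{S0}. if T \<subseteq> S then d S else 0) = 0"
      proof (intro allI impI)
        fix T :: "'a set" assume "finite T"
        then have z: "(\<Sum>S\<in>A. if T \<subseteq> S then d S else 0) = 0" using h by blast
        have "(\<Sum>S\<in>A. if T \<subseteq> S then d S else 0) =
            (if T \<subseteq> S0 then d S0 else 0) + (\<Sum>S\<in>A-{S0}. if T \<subseteq> S then d S else 0)"
          by (rule sum.remove[OF remove.hyps(1) S0(1)])
        moreover have "(if T \<subseteq> S0 then d S0 else 0) = 0" using d0 by simp
        ultimately show "(\<Sum>S\<in>A-{S0}. if T \<subseteq> S then d S else 0) = 0"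
          using z by simp
      qed
      then have "\<forall>S\<in>A-{S0}. d S = 0" using remove.IH[OF S0(1)] by blast
      then show "\<forall>S\<in>A. d S = 0" using d0 by blast
    qed
  qed
  then show ?thesis using assms(2) by blast
qed

lemma underS_lesspoll:
  assumes "card_order_on I r" "a \<in> I"
  shows "underS r a \<prec> I"
proof -
  have co: "I = Field r" "Card_order r" using card_order_on_Card_order[OF assms(1)] by auto
  have "|underS r a| <o r" using card_of_underS[OF co(2)] assms(2) co(1) by simp
  moreover have "|I| =o r" using card_of_Field_ordIso[OF co(2)] co(1) by simp
  ultimately have lt: "|underS r a| <o |I|" using ordLess_ordIso_trans ordIso_symmetric by blast
  have "underS r a \<lesssim> I"
    unfolding lepoll_def using card_of_ordLeq ordLess_imp_ordLeq[OF lt] by blast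
  moreover have "\<not> underS r a \<approx> I"
    unfolding eqpoll_iff_card_of_ordIso using not_ordLess_ordIso[OF lt] by blast
  ultimately show ?thesis unfolding lesspoll_def by blast
qed



theorem mainTheorem8:
  fixes I :: "'i set" and r :: "'i rel"
  assumes "card_order_on I r"
    and "is_addN I"
    and "is_covN I"
  shows "pos_coneable (NM I r) (Pow (UNIV :: real set))
       \<and> pos_coneable (NF I r) (Pow (UNIV :: real set))
       \<and> pos_coneable (ND I r) (Pow (UNIV :: real set))"
proof -
  have wo: "well_order_on I r" using assms(1) unfolding card_order_on_def by blast
  have lin: "linear_order_on I r" using wo by (simp add: well_order_on_def)
  have FI: "Field r = I" using card_order_on_Card_order[OF assms(1)] by simp
  from assms(3) obtain F0 where F0: "F0 \<subseteq> nullN" "F0 \<approx> I" "\<Union>F0 = {0..1}"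
    unfolding is_covN_def by blast
  obtain g where g: "bij_betw g I F0"
    using eqpoll_sym[OF F0(2)] unfolding eqpoll_def by blast
  have gI: "g ` I = F0" using g by (simp add: bij_betw_def)
  have gnull: "g b \<in> null_sets lebesgue" if "b \<in> I" for b
    using that gI F0(1) unfolding nullN_def by blast
  define A where "A a = \<Union> (g ` underS r a)" for a
  have uI: "underS r a \<subseteq> I" for a
    using Order_Relation.underS_Field[of r a] FI by simp
  have Anull: "A a \<in> null_sets lebesgue" if a: "a \<in> I" for a
  proof -
    have sub: "g ` underS r a \<subseteq> nullN" using uI gI F0(1) by blast
    have "g ` underS r a \<lesssim> underS r a" by (rule image_lepoll)
    also have "underS r a \<prec> I" by (rule underS_lesspoll[OF assms(1) a])
    finally have "g ` underS r a \<prec> I" .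
    then have "\<Union> (g ` underS r a) \<in> nullN" using assms(2) sub unfolding is_addN_def by blast
    then show ?thesis unfolding A_def nullN_def by blast
  qed
  have cover: "\<exists>b\<in>I. \<forall>a\<in>I. (b, a) \<in> r \<and> a \<noteq> b \<longrightarrow> x \<in> A a" if x: "x \<in> {0..1}" for x
  proof -
    have "x \<in> \<Union> (g ` I)" using x F0(3) gI by simp
    then obtain b where b: "b \<in> I" "x \<in> g b" by blast
    have "x \<in> A a" if "a \<in> I" "(b, a) \<in> r" "a \<noteq> b" for a
    proof -
      have "b \<in> underS r a" using that unfolding underS_def by simp
      then show ?thesis unfolding A_def using b(2) by blast
    qed
    then show ?thesis using b(1) by blast
  qed
  have notnull: "{0..1::real} \<notin> null_sets lebesgue"
  proof
    assume "{0..1::real} \<in> null_sets lebesgue"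
    then have "emeasure lebesgue {0..1::real} = 0" by (rule null_setsD1)
    then have "measure lebesgue {0..1::real} = 0" by (simp add: measure_def)
    then show False using measure_Icc_real[of 0 1] by simp
  qed
  have tail: "\<exists>a\<in>I. (a0, a) \<in> r \<and> a \<noteq> a0" if a0: "a0 \<in> I" for a0
  proof (rule ccontr)
    assume no: "\<not> (\<exists>a\<in>I. (a0, a) \<in> r \<and> a \<noteq> a0)"
    have tot: "total_on I r" using lin by (simp add: linear_order_on_def)
    have "b \<in> underS r a0 \<union> {a0}" if b: "b \<in> I" for b
    proof (cases "b = a0")
      case False
      then have "(a0, b) \<in> r \<or> (b, a0) \<in> r" using tot a0 b unfolding total_on_def by blast
      then have "(b, a0) \<in> r" using no b False by blast
      then show ?thesis using False unfolding underS_def by simp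
    qed simp
    then have "{0..1} \<subseteq> A a0 \<union> g a0"
      using F0(3) gI unfolding A_def by blast
    moreover have "A a0 \<union> g a0 \<in> null_sets lebesgue" using Anull[OF a0] gnull[OF a0] by (rule null_sets.Un)
    ultimately have "{0..1::real} \<in> null_sets lebesgue"
      using null_sets_subset[of "A a0 \<union> g a0" lebesgue "{0..1::real}"] by simp
    then show False using notnull by simp
  qed
  have nonempty: "I \<noteq> {}"
  proof
    assume e: "I = {}"
    from assms(2) obtain F where F: "F \<subseteq> nullN" "F \<approx> I" "\<Union>F \<notin> nullN"
      unfolding is_addN_def by blast
    then have "F = {}" using e by simp
    then show False using F(3) unfolding nullN_def by simp
  qed
  obtain Z and j :: "real set \<Rightarrow> real" where Zj: "Z \<in> null_sets lebesgue" "Z \<subseteq> {0..1}"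
      "inj_on j (Fpow UNIV)" "j ` Fpow UNIV \<subseteq> Z"
    using null_code by blast
  interpret S: setting I r A Z
    by (unfold_locales) (use wo Zj(1) Anull cover tail nonempty in auto)
  define h where "h S x = (if \<exists>T. finite T \<and> T \<subseteq> S \<and> j T = x then 1 else 0 :: real)" for S x
  define Fam where "Fam S = S.G 1 (h S)" for S
  have Fam_eval: "Fam S a (j T) = (if T \<subseteq> S then 1 else 0)" if a: "a \<in> I" and T: "finite T" for S a T
  proof -
    have j1: "j T \<in> Z" using Zj(4) T unfolding Fpow_def by blast
    have jT: "j T \<in> Z" "j T \<in> {0..1}" using j1 Zj(2) by blast+
    have "h S (j T) = (if T \<subseteq> S then 1 else 0)"
    proof (cases "T \<subseteq> S")
      case True
      then show ?thesis unfolding h_def using T by auto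
    next
      case False
      have "\<not> (\<exists>T'. finite T' \<and> T' \<subseteq> S \<and> j T' = j T)"
      proof
        assume "\<exists>T'. finite T' \<and> T' \<subseteq> S \<and> j T' = j T"
        then obtain T' where T': "finite T'" "T' \<subseteq> S" "j T' = j T" by blast
        then have "T' = T" using Zj(3) T unfolding inj_on_def Fpow_def by blast
        then have "T \<subseteq> S" using T'(2) by (rule subst)
        then show False using False by (rule notE[rotated])
      qed
      then show ?thesis unfolding h_def using False by simp
    qed
    then show ?thesis unfolding Fam_def S.G_def using a jT by simp
  qed
  have Fam_out: "Fam S a x = 0" if "\<not> (a \<in> I \<and> x \<in> {0..1})" for S a x
    using that unfolding Fam_def S.G_def by (simp only: if_False)
  have Fam_Z: "Fam S a x = h S x" if "a \<in> I \<and> x \<in> {0..1}" "x \<in> Z" for S a x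
    using that unfolding Fam_def S.G_def by simp
  have Fam_nZ: "Fam S a x = indicator (A a) x" if "a \<in> I \<and> x \<in> {0..1}" "x \<notin> Z" for S a x
    using that unfolding Fam_def S.G_def by simp
  obtain a0 where a0: "a0 \<in> I" using nonempty by blast
  have injF: "inj Fam"
  proof (rule injI)
    fix S S' assume eq: "Fam S = Fam S'"
    have "t \<in> S \<longleftrightarrow> t \<in> S'" for t
    proof -
      have "Fam S a0 (j {t}) = Fam S' a0 (j {t})" using eq by simp
      then show "t \<in> S \<longleftrightarrow> t \<in> S'" using Fam_eval[OF a0, of "{t}"] by (simp split: if_splits)
    qed
    then show "S = S'" by blast
  qed
  define B where "B = range Fam"
  have Beq: "B \<approx> Pow (UNIV :: real set)"
  proof -
    have "bij_betw Fam (Pow (UNIV :: real set)) B"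
      unfolding B_def bij_betw_def using injF by simp
    then show ?thesis using eqpoll_sym unfolding eqpoll_def by blast
  qed
  have preimg: "finite (Fam -` T) \<and> T = Fam ` (Fam -` T)" if "finite T" "T \<subseteq> B" for T
    using that injF finite_vimageI[OF that(1) injF] unfolding B_def by blast
  have lincomb_eq: "lincomb c T = (\<lambda>a x. \<Sum>S\<in>Fam -` T. c (Fam S) * Fam S a x)"
    if "finite T" "T \<subseteq> B" for c T
  proof -
    have e: "T = Fam ` (Fam -` T)" using preimg[OF that] by blast
    have "lincomb c T = (\<lambda>a x. \<Sum>b\<in>Fam ` (Fam -` T). c b * b a x)"
      unfolding lincomb_def using e by simp
    also have "\<dots> = (\<lambda>a x. \<Sum>S\<in>Fam -` T. c (Fam S) * Fam S a x)"
      using sum.reindex[of Fam "Fam -` T" "\<lambda>b. c b * b _ _"] injF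
      by (simp add: inj_on_subset[OF injF])
    finally show ?thesis .
  qed
  have indep: "lin_indep B"
    unfolding lin_indep_def
  proof (intro allI impI)
    fix T c assume h0: "finite T \<and> T \<subseteq> B \<and> lincomb c T = (\<lambda>a x. 0)"
    then have T: "finite T" "T \<subseteq> B" and lc: "lincomb c T = (\<lambda>a x. 0)" by auto
    define SS where "SS = Fam -` T"
    have SS: "finite SS" "T = Fam ` SS" using preimg[OF T] unfolding SS_def by auto
    have "\<forall>T'. finite T' \<longrightarrow> (\<Sum>S\<in>SS. if T' \<subseteq> S then (c \<circ> Fam) S else 0) = 0"
    proof (intro allI impI)
      fix T' :: "real set" assume fT: "finite T'"
      have "0 = lincomb c T a0 (j T')" using lc by simp
      also have "\<dots> = (\<Sum>S\<in>SS. c (Fam S) * Fam S a0 (j T'))"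
        using lincomb_eq[OF T] unfolding SS_def by simp
      also have "\<dots> = (\<Sum>S\<in>SS. if T' \<subseteq> S then (c \<circ> Fam) S else 0)"
        by (rule sum.cong[OF refl]) (simp add: Fam_eval[OF a0 fT])
      finally show "(\<Sum>S\<in>SS. if T' \<subseteq> S then (c \<circ> Fam) S else 0) = 0" by simp
    qed
    then have "\<forall>S\<in>SS. (c \<circ> Fam) S = 0" by (rule subset_indep[OF SS(1)])
    then show "\<forall>b\<in>T. c b = 0" using SS(2) by auto
  qed
  have cone: "lincomb c T \<in> NM I r \<and> lincomb c T \<in> NF I r \<and> lincomb c T \<in> ND I r"
    if h0: "finite T \<and> T \<noteq> {} \<and> T \<subseteq> B \<and> (\<forall>b\<in>T. c b > 0)" for T c
  proof -
    have T: "finite T" "T \<subseteq> B" "T \<noteq> {}" and cpos: "\<forall>b\<in>T. c b > 0" using h0 by auto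
    define SS where "SS = Fam -` T"
    have SS: "finite SS" "T = Fam ` SS" using preimg[OF T(1,2)] unfolding SS_def by auto
    have SSne: "SS \<noteq> {}" using SS(2) T(3) by auto
    define C where "C = (\<Sum>S\<in>SS. c (Fam S))"
    define H where "H x = (\<Sum>S\<in>SS. c (Fam S) * h S x)" for x
    have Cpos: "C > 0" unfolding C_def
      using sum_pos[OF SS(1) SSne, of "\<lambda>S. c (Fam S)"] cpos SS(2) by auto
    have eq: "lincomb c T = S.G C H"
    proof (intro ext)
      fix a x
      have "lincomb c T a x = (\<Sum>S\<in>SS. c (Fam S) * Fam S a x)"
        using lincomb_eq[OF T(1,2)] unfolding SS_def by simp
      also have "\<dots> = S.G C H a x"
      proof (cases "a \<in> I \<and> x \<in> {0..1}")
        case False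
        have "S.G C H a x = 0" using False unfolding S.G_def by (simp only: if_False)
        then show ?thesis using Fam_out[OF False] by simp
      next
        case True
        show ?thesis
        proof (cases "x \<in> Z")
          case True
          then show ?thesis using \<open>a \<in> I \<and> x \<in> {0..1}\<close> Fam_Z
            unfolding S.G_def H_def by simp
        next
          case False
          then show ?thesis using \<open>a \<in> I \<and> x \<in> {0..1}\<close> Fam_nZ
            unfolding S.G_def C_def by (simp add: sum_distrib_right)
        qed
      qed
      finally show "lincomb c T a x = S.G C H a x" .
    qed
    show ?thesis unfolding eq using S.G_NM[OF Cpos] S.G_NF[OF Cpos] S.G_ND[OF Cpos] by blast
  qed
  have "B \<subseteq> NM I r" "B \<subseteq> NF I r" "B \<subseteq> ND I r"
  proof -
    have "Fam S \<in> NM I r \<and> Fam S \<in> NF I r \<and> Fam S \<in> ND I r" for S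
      unfolding Fam_def using S.G_NM[of 1] S.G_NF[of 1] S.G_ND[of 1] by simp
    then show "B \<subseteq> NM I r" "B \<subseteq> NF I r" "B \<subseteq> ND I r" unfolding B_def by auto
  qed
  note BB = this
  have cNM: "\<forall>T c. finite T \<and> T \<noteq> {} \<and> T \<subseteq> B \<and> (\<forall>b\<in>T. c b > 0) \<longrightarrow> lincomb c T \<in> NM I r"
    using cone by blast
  have cNF: "\<forall>T c. finite T \<and> T \<noteq> {} \<and> T \<subseteq> B \<and> (\<forall>b\<in>T. c b > 0) \<longrightarrow> lincomb c T \<in> NF I r"
    using cone by blast
  have cND: "\<forall>T c. finite T \<and> T \<noteq> {} \<and> T \<subseteq> B \<and> (\<forall>b\<in>T. c b > 0) \<longrightarrow> lincomb c T \<in> ND I r"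
    using cone by blast
  show ?thesis
    unfolding pos_coneable_def
    by (intro conjI exI[of _ B] BB Beq indep cNM cNF cND)
qed

end
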